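(* Let $\mathcal C,\mathcal C^0,\mathcal C_\gamma$ be as defined in the context. Then $\mathcal C\subset\mathcal C^0$ and $\mathcal C\subset\mathcal C_\gamma$ for all $\gamma\geq0$. Moreover, if $G\in\mathcal C^0\setminus\mathcal C$, then there is $\gamma_*(G)>0$ such that $G\in\mathcal C_\gamma$ for all $\gamma\in[0,\gamma_*(G))$.
   Context: $\mathcal{G}$ is the set of finite, simple, connected, undirected, edge-weighted graphs $G=(V,E,\omega)$ with $V=\{1,\dots,n\}$, $n\geq2$, weights $\omega_{ij}=\omega_{ji}>0$ on edges, $0$ otherwise. $d_i=\sum_j\omega_{ij}$. Fixed $r\in[0,1]$: for $u:V\to\mathbb R$, $(\Delta u)_i=d_i^{-r}\sum_j\omega_{ij}(u_i-u_j)$, $\mathcal M(u)=\sum_id_i^ru_i$, $\mathrm{vol}(V)=\sum_id_i^r$, $\mathcal A(u)=\frac{\mathcal M(u)}{\mathrm{vol}(V)}\chi_V$. Equilibrium measure $\nu^S$ ($S\subsetneq V$): unique $\nu:V\to\mathbb R$ with $(\Delta\nu)_i=1$ on $S$, $\nu=0$ off $S$. $f^j:=\nu^{V\setminus\{j\}}-\mathcal A(\nu^{V\setminus\{j\}})$. $\mathcal C=\{G\in\mathcal G:\forall j\in V\ \forall i\in V\setminus\{j\}:\ f^j_i\geq0\}$; $\mathcal C^0=\{G\in\mathcal G:\forall j\ \forall i\neq j:\ \omega_{ij}>0\text{ or }f^j_i\geq0\}$; for $\gamma>0$, $\mathcal C_\gamma=\{G\in\mathcal C^0:\forall j\ \forall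 i\neq j:\ \omega_{ij}=0\text{ or }d_i^{-r}\omega_{ij}+\gamma\frac{d_j^r}{\mathrm{vol}(V)}f^j_i>0\}$; $\mathcal C_0:=\mathcal G$. *)

theory Defs
  imports Complex_Main
begin

text \<open>Weighted graphs on the vertex set V = {1..n}, given by a weight function w.
  w i j > 0 iff ij is an edge; w is symmetric, nonnegative, zero on the diagonal
  (simple graph) and zero outside V x V.\<close>

definition wgraph :: "nat \<Rightarrow> (nat \<Rightarrow> nat \<Rightarrow> real) \<Rightarrow> bool" where
  "wgraph n w \<longleftrightarrow> n \<ge> 2
     \<and> (\<forall>i j. w i j = w j i)
     \<and> (\<forall>i j. 0 \<le> w i j)
     \<and> (\<forall>i. w i i = 0)
     \<and> (\<forall>i j. w i j \<noteq> 0 \<longrightarrow> i \<in> {1..n} \<and> j \<in> {1..n})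
     \<and> (\<forall>i\<in>{1..n}. \<forall>j\<in>{1..n}. (\<lambda>a b. 0 < w a b)\<^sup>*\<^sup>* i j)"

definition deg :: "nat \<Rightarrow> (nat \<Rightarrow> nat \<Rightarrow> real) \<Rightarrow> nat \<Rightarrow> real" where
  "deg n w i = (\<Sum>j\<in>{1..n}. w i j)"

definition lap :: "nat \<Rightarrow> real \<Rightarrow> (nat \<Rightarrow> nat \<Rightarrow> real) \<Rightarrow> (nat \<Rightarrow> real) \<Rightarrow> nat \<Rightarrow> real" where
  "lap n r w u i = deg n w i powr (-r) * (\<Sum>j\<in>{1..n}. w i j * (u i - u j))"

definition mass :: "nat \<Rightarrow> real \<Rightarrow> (nat \<Rightarrow> nat \<Rightarrow> real) \<Rightarrow> (nat \<Rightarrow> real) \<Rightarrow> real" where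
  "mass n r w u = (\<Sum>i\<in>{1..n}. deg n w i powr r * u i)"

definition vol :: "nat \<Rightarrow> real \<Rightarrow> (nat \<Rightarrow> nat \<Rightarrow> real) \<Rightarrow> real" where
  "vol n r w = (\<Sum>i\<in>{1..n}. deg n w i powr r)"

definition avg :: "nat \<Rightarrow> real \<Rightarrow> (nat \<Rightarrow> nat \<Rightarrow> real) \<Rightarrow> (nat \<Rightarrow> real) \<Rightarrow> nat \<Rightarrow> real" where
  "avg n r w u i = (if i \<in> {1..n} then mass n r w u / vol n r w else 0)"

definition eqm :: "nat \<Rightarrow> real \<Rightarrow> (nat \<Rightarrow> nat \<Rightarrow> real) \<Rightarrow> nat set \<Rightarrow> nat \<Rightarrow> real" where
  "eqm n r w S = (THE \<nu>. (\<forall>i\<in>S. lap n r w \<nu> i = 1) \<and> (\<forall>i. i \<notin> S \<longrightarrow> \<nu> i = 0))"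

definition fj :: "nat \<Rightarrow> real \<Rightarrow> (nat \<Rightarrow> nat \<Rightarrow> real) \<Rightarrow> nat \<Rightarrow> nat \<Rightarrow> real" where
  "fj n r w j i = eqm n r w ({1..n} - {j}) i - avg n r w (eqm n r w ({1..n} - {j})) i"

definition classC :: "nat \<Rightarrow> real \<Rightarrow> (nat \<Rightarrow> nat \<Rightarrow> real) \<Rightarrow> bool" where
  "classC n r w \<longleftrightarrow> wgraph n w \<and>
     (\<forall>j\<in>{1..n}. \<forall>i\<in>{1..n} - {j}. 0 \<le> fj n r w j i)"

definition classC0 :: "nat \<Rightarrow> real \<Rightarrow> (nat \<Rightarrow> nat \<Rightarrow> real) \<Rightarrow> bool" where
  "classC0 n r w \<longleftrightarrow> wgraph n w \<and>
     (\<forall>j\<in>{1..n}. \<forall>i\<in>{1..n} - {j}. 0 < w i j \<or> 0 \<le> fj n r w j i)"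

text \<open>C_gamma for gamma > 0 as defined; C_0 is by convention all graphs.\<close>
definition classCg :: "real \<Rightarrow> nat \<Rightarrow> real \<Rightarrow> (nat \<Rightarrow> nat \<Rightarrow> real) \<Rightarrow> bool" where
  "classCg \<gamma> n r w \<longleftrightarrow>
     (if \<gamma> = 0 then wgraph n w
      else classC0 n r w \<and>
        (\<forall>j\<in>{1..n}. \<forall>i\<in>{1..n} - {j}. w i j = 0 \<or>
           deg n w i powr (-r) * w i j + \<gamma> * deg n w j powr r / vol n r w * fj n r w j i > 0))"

end

theory Submission
  imports Defs
begin

lemma deg_pos:
  assumes "wgraph n w" "j \<in> {1..n}" "0 < w i j"
  shows "0 < deg n w i"
proof -
  have "w i j \<le> deg n w i" unfolding deg_def
    by (rule member_le_sum) (use assms in \<open>auto simp: wgraph_def\<close>)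
  thus ?thesis using assms by linarith
qed

lemma vol_nonneg: "0 \<le> vol n r w"
  unfolding vol_def by (rule sum_nonneg) simp

lemma term_pos:
  assumes "wgraph n w" "j \<in> {1..n}" "0 < w i j"
  shows "0 < deg n w i powr (-r) * w i j"
  using deg_pos[OF assms] assms(3) by simp

theorem lemma6p3:
  fixes r :: real
  assumes "0 \<le> r" and "r \<le> 1"
  shows "(\<forall>n w. classC n r w \<longrightarrow> classC0 n r w)
       \<and> (\<forall>\<gamma>\<ge>0. \<forall>n w. classC n r w \<longrightarrow> classCg \<gamma> n r w)
       \<and> (\<forall>n w. classC0 n r w \<and> \<not> classC n r w \<longrightarrow>
            (\<exists>\<gamma>s>0. \<forall>\<gamma>. 0 \<le> \<gamma> \<and> \<gamma> < \<gamma>s \<longrightarrow> classCg \<gamma> n r w))"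
proof (intro conjI allI impI)
  fix n w assume "classC n r w" thus "classC0 n r w"
    by (auto simp: classC_def classC0_def)
next
  fix \<gamma> :: real and n w assume g: "\<gamma> \<ge> 0" and C: "classC n r w"
  have C0: "classC0 n r w" using C by (auto simp: classC_def classC0_def)
  have W: "wgraph n w" using C by (simp add: classC_def)
  show "classCg \<gamma> n r w"
  proof (cases "\<gamma> = 0")
    case True thus ?thesis using W by (simp add: classCg_def)
  next
    case False
    have "\<forall>j\<in>{1..n}. \<forall>i\<in>{1..n} - {j}. w i j = 0 \<or>
           deg n w i powr (-r) * w i j + \<gamma> * deg n w j powr r / vol n r w * fj n r w j i > 0"
    proof (intro ballI)
      fix j i assume j: "j \<in> {1..n}" and i: "i \<in> {1..n} - {j}"
      show "w i j = 0 \<or>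
           deg n w i powr (-r) * w i j + \<gamma> * deg n w j powr r / vol n r w * fj n r w j i > 0"
      proof (cases "w i j = 0")
        case False
        hence p: "0 < w i j" using W by (auto simp: wgraph_def order_le_less)
        have f: "0 \<le> fj n r w j i" using C j i by (auto simp: classC_def)
        have "0 \<le> \<gamma> * deg n w j powr r / vol n r w * fj n r w j i"
          using g f vol_nonneg[of n r w] by simp
        thus ?thesis using term_pos[OF W j p, of r] by linarith
      qed simp
    qed
    thus ?thesis using False C0 by (simp add: classCg_def)
  qed
next
  fix n w assume A: "classC0 n r w \<and> \<not> classC n r w"
  have C0: "classC0 n r w" using A by simp
  have W: "wgraph n w" using C0 by (simp add: classC0_def)
  define a where "a i j = deg n w i powr (-r) * w i j" for i j
  define b where "b i j = deg n w j powr r / vol n r w * fj n r w j i" for i j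
  define g where "g p = (if b (fst p) (snd p) < 0 then a (fst p) (snd p) / (- b (fst p) (snd p)) else 1)" for p
  define E where "E = {p \<in> {1..n} \<times> {1..n}. 0 < w (fst p) (snd p)}"
  define gs where "gs = Min (insert 1 (g ` E))"
  have fin: "finite (insert 1 (g ` E))" unfolding E_def by simp
  have gpos: "0 < g p" if "p \<in> E" for p
  proof -
    obtain i j where pe: "p = (i, j)" by (cases p)
    have "j \<in> {1..n}" "0 < w i j" using that pe by (auto simp: E_def)
    hence "0 < a i j" using term_pos[OF W] by (simp add: a_def)
    thus ?thesis by (simp add: g_def pe divide_pos_neg)
  qed
  have gspos: "0 < gs" unfolding gs_def using fin gpos by (subst Min_gr_iff) auto
  show "\<exists>\<gamma>s>0. \<forall>\<gamma>. 0 \<le> \<gamma> \<and> \<gamma> < \<gamma>s \<longrightarrow> classCg \<gamma> n r w"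
  proof (intro exI conjI allI impI)
    show "0 < gs" by (rule gspos)
    fix \<gamma> :: real assume h: "0 \<le> \<gamma> \<and> \<gamma> < gs"
    show "classCg \<gamma> n r w"
    proof (cases "\<gamma> = 0")
      case True thus ?thesis using W by (simp add: classCg_def)
    next
      case False
      have "\<forall>j\<in>{1..n}. \<forall>i\<in>{1..n} - {j}. w i j = 0 \<or>
           deg n w i powr (-r) * w i j + \<gamma> * deg n w j powr r / vol n r w * fj n r w j i > 0"
      proof (intro ballI)
        fix j i assume j: "j \<in> {1..n}" and i: "i \<in> {1..n} - {j}"
        show "w i j = 0 \<or>
           deg n w i powr (-r) * w i j + \<gamma> * deg n w j powr r / vol n r w * fj n r w j i > 0"
        proof (cases "w i j = 0")
          case False
          hence p: "0 < w i j" using W by (auto simp: wgraph_def order_le_less)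
          have ap: "0 < a i j" using term_pos[OF W j p] by (simp add: a_def)
          have inE: "(i, j) \<in> E" using i j p by (auto simp: E_def)
          have "gs \<le> g (i, j)" unfolding gs_def using fin inE by (intro Min_le) auto
          hence lt: "\<gamma> < g (i, j)" using h by linarith
          have "0 < a i j + \<gamma> * b i j"
          proof (cases "b i j < 0")
            case True
            hence "\<gamma> < a i j / (- b i j)" using lt by (simp add: g_def)
            hence "\<gamma> * (- b i j) < a i j / (- b i j) * (- b i j)"
              using True by (intro mult_strict_right_mono) auto
            hence "\<gamma> * (- b i j) < a i j" using True by simp
            thus ?thesis by linarith
          next
            case False thus ?thesis using ap h by (smt (verit) mult_nonneg_nonneg)
          qed
          thus ?thesis by (simp add: a_def b_def mult.assoc)
        qed simp
      qed
      thus ?thesis using False C0 by (simp add: classCg_def)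
    qed
  qed
qed

end
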